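(* Let $S\subset\mathbb{R}^d$ be a $d$-simplex that is lattice complete with respect to a $d$-dimensional lattice $\Lambda$. Then the diameter directions of $S$ span $\mathbb{R}^d$.
   Context: A lattice $\Lambda\subset\mathbb{R}^d$ is a discrete subgroup spanning $\mathbb{R}^d$. A segment $[a,b]$ is a lattice segment if $b-a$ is parallel to a nonzero vector of $\Lambda$; its lattice length is $|b-a|/|v|$ where $v$ generates $\Lambda\cap\mathrm{span}\{b-a\}$ and is a positive multiple of $b-a$. For a convex body $C$ (compact convex, non-empty interior), $\mathrm{diam}_\Lambda(C)$ is the maximum lattice length of a lattice segment in $C$; a diameter direction of $C$ is a $v\in\Lambda\setminus\{0\}$ such that $C$ contains a segment $[a,a+\mathrm{diam}_\Lambda(C)v]$. $C$ is lattice complete if no convex body $C'\supsetneq C$ has $\mathrm{diam}_\Lambda(C')=\mathrm{diam}_\Lambda(C)$. *)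

theory Defs
  imports "HOL-Analysis.Analysis"
begin

definition is_lattice :: "'a::euclidean_space set \<Rightarrow> bool" where
  "is_lattice L \<longleftrightarrow> 0 \<in> L \<and> (\<forall>x\<in>L. \<forall>y\<in>L. x - y \<in> L) \<and> discrete L \<and> span L = UNIV"

definition convex_body :: "'a::euclidean_space set \<Rightarrow> bool" where
  "convex_body C \<longleftrightarrow> compact C \<and> convex C \<and> interior C \<noteq> {}"

definition lattice_segment :: "'a::euclidean_space set \<Rightarrow> 'a \<Rightarrow> 'a \<Rightarrow> bool" where
  "lattice_segment L a b \<longleftrightarrow> a \<noteq> b \<and> (\<exists>v\<in>L. v \<noteq> 0 \<and> (\<exists>c. b - a = c *\<^sub>R v))"

definition primitive_dir :: "'a::euclidean_space set \<Rightarrow> 'a \<Rightarrow> 'a \<Rightarrow> 'a \<Rightarrow> bool" where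
  "primitive_dir L a b v \<longleftrightarrow> v \<in> L \<and> (\<exists>c>0. v = c *\<^sub>R (b - a)) \<and>
     L \<inter> span {b - a} = range (\<lambda>k::int. of_int k *\<^sub>R v)"

definition lattice_length :: "'a::euclidean_space set \<Rightarrow> 'a \<Rightarrow> 'a \<Rightarrow> real" where
  "lattice_length L a b = norm (b - a) / norm (SOME v. primitive_dir L a b v)"

definition lattice_diam :: "'a::euclidean_space set \<Rightarrow> 'a set \<Rightarrow> real" where
  "lattice_diam L C = Sup {lattice_length L a b | a b. lattice_segment L a b \<and> closed_segment a b \<subseteq> C}"

definition diameter_direction :: "'a::euclidean_space set \<Rightarrow> 'a set \<Rightarrow> 'a \<Rightarrow> bool" where
  "diameter_direction L C v \<longleftrightarrow> v \<in> L \<and> v \<noteq> 0 \<and>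
     (\<exists>a. closed_segment a (a + lattice_diam L C *\<^sub>R v) \<subseteq> C)"

definition lattice_complete :: "'a::euclidean_space set \<Rightarrow> 'a set \<Rightarrow> bool" where
  "lattice_complete L C \<longleftrightarrow> convex_body C \<and>
     \<not> (\<exists>C'. convex_body C' \<and> C \<subset> C' \<and> lattice_diam L C' = lattice_diam L C)"

end

theory Submission
  imports Defs
begin


context
  fixes L :: "'a::euclidean_space set"
  assumes lat: "is_lattice L"
begin

lemma lat_0: "0 \<in> L" using lat by (simp add: is_lattice_def)
lemma lat_diff: "x \<in> L \<Longrightarrow> y \<in> L \<Longrightarrow> x - y \<in> L" using lat by (simp add: is_lattice_def)
lemma lat_neg: "x \<in> L \<Longrightarrow> - x \<in> L" using lat_diff[OF lat_0, of x] by simp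
lemma lat_add: "x \<in> L \<Longrightarrow> y \<in> L \<Longrightarrow> x + y \<in> L"
  using lat_diff[of x "- y"] lat_neg[of y] by simp

lemma lat_nat: "x \<in> L \<Longrightarrow> of_nat n *\<^sub>R x \<in> L"
  by (induction n) (auto simp: lat_0 algebra_simps intro: lat_add)

lemma lat_int: "x \<in> L \<Longrightarrow> of_int k *\<^sub>R x \<in> L"
proof (cases "k \<ge> 0")
  case True
  assume "x \<in> L"
  then have "of_nat (nat k) *\<^sub>R x \<in> L" by (rule lat_nat)
  with True show ?thesis by simp
next
  case False
  assume "x \<in> L"
  then have "- (of_nat (nat (-k)) *\<^sub>R x) \<in> L" by (intro lat_neg lat_nat)
  with False show ?thesis by simp
qed

lemma lat_min: "\<exists>e>0. \<forall>x\<in>L. x \<noteq> 0 \<longrightarrow> e \<le> norm x"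
proof -
  have "0 isolated_in L" using lat lat_0 by (auto simp: is_lattice_def discrete_def)
  then obtain d where d: "d > 0" "\<And>y. y \<in> L \<Longrightarrow> dist 0 y < d \<Longrightarrow> y = 0"
    by (metis isolated_inE_dist)
  show ?thesis
    by (rule exI[of _ d]) (use d in \<open>auto simp: not_less[symmetric]\<close>)
qed

lemma lat_unif: "uniform_discrete L"
proof -
  obtain e where e: "e > 0" "\<And>x. x \<in> L \<Longrightarrow> x \<noteq> 0 \<Longrightarrow> e \<le> norm x" using lat_min by blast
  show ?thesis unfolding uniform_discrete_def
  proof (intro exI[of _ e] conjI ballI impI)
    fix x y assume "x \<in> L" "y \<in> L" "dist x y < e"
    then have "x - y \<in> L" "norm (x - y) < e" by (auto simp: lat_diff dist_norm)
    with e show "x = y" by force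
  qed (use e in auto)
qed

lemma lat_finite: "bounded B \<Longrightarrow> finite (L \<inter> B)"
  using uniform_discrete_finite_iff[of "L \<inter> B"] lat_unif
  by (meson bounded_subset inf_le1 inf_le2 uniform_discrete_subset)


lemma prim_exists:
  assumes "lattice_segment L a b"
  shows "\<exists>p. primitive_dir L a b p"
proof -
  define u where "u = b - a"
  from assms obtain v c where v0: "v \<in> L" "v \<noteq> 0" "b - a = c *\<^sub>R v" "a \<noteq> b"
    by (auto simp: lattice_segment_def)
  then have v: "v \<in> L" "v \<noteq> 0" "u = c *\<^sub>R v" "u \<noteq> 0" by (auto simp: u_def)
  then have c0: "c \<noteq> 0" by auto
  define Q where "Q = {t. t > 0 \<and> t *\<^sub>R u \<in> L}"
  define t1 where "t1 = \<bar>1 / c\<bar>"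
  have "t1 \<in> Q"
  proof (cases "c > 0")
    case True
    then show ?thesis using v c0 by (auto simp: Q_def t1_def)
  next
    case False
    then have "t1 *\<^sub>R u = - v" using v c0 by (auto simp: t1_def)
    then show ?thesis using v c0 lat_neg[of v] by (auto simp: Q_def t1_def)
  qed
  define Q' where "Q' = Q \<inter> {..t1}"
  have "(\<lambda>t. t *\<^sub>R u) ` Q' \<subseteq> L \<inter> cball 0 (t1 * norm u)"
    by (auto simp: Q'_def Q_def intro!: mult_right_mono)
  then have "finite ((\<lambda>t. t *\<^sub>R u) ` Q')"
    by (meson bounded_cball finite_subset lat_finite)
  moreover have "inj_on (\<lambda>t. t *\<^sub>R u) Q'" using v by (auto simp: inj_on_def)
  ultimately have fQ': "finite Q'" using finite_imageD by blast
  have "t1 \<in> Q'" using \<open>t1 \<in> Q\<close> by (auto simp: Q'_def)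
  define t0 where "t0 = Min Q'"
  have t0Q: "t0 \<in> Q" using Min_in[OF fQ'] \<open>t1 \<in> Q'\<close> by (auto simp: t0_def Q'_def)
  have t0min: "t0 \<le> t" if "t \<in> Q" for t
  proof (cases "t \<le> t1")
    case True
    then show ?thesis using that fQ' by (auto simp: t0_def Q'_def)
  next
    case False
    have "t0 \<le> t1" using fQ' \<open>t1 \<in> Q'\<close> by (auto simp: t0_def)
    then show ?thesis using False by auto
  qed
  define p where "p = t0 *\<^sub>R u"
  have "L \<inter> span {u} = range (\<lambda>k::int. of_int k *\<^sub>R p)"
  proof
    show "L \<inter> span {u} \<subseteq> range (\<lambda>k::int. of_int k *\<^sub>R p)"
    proof
      fix x assume x: "x \<in> L \<inter> span {u}"
      then obtain s where s: "x = s *\<^sub>R u" by (auto simp: span_singleton)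
      have t0p: "t0 > 0" using t0Q by (auto simp: Q_def)
      define k where "k = \<lfloor>s / t0\<rfloor>"
      define r where "r = s - of_int k * t0"
      have r0: "0 \<le> r" "r < t0"
        using t0p floor_divide_lower[OF t0p, of s] floor_divide_upper[OF t0p, of s]
        by (auto simp: r_def k_def algebra_simps)
      have pL: "p \<in> L" using t0Q by (simp add: p_def Q_def)
      have "x - of_int k *\<^sub>R p \<in> L"
        using x lat_diff[OF _ lat_int[OF pL]] by blast
      moreover have "x - of_int k *\<^sub>R p = r *\<^sub>R u"
        by (simp add: s p_def r_def algebra_simps)
      ultimately have "r *\<^sub>R u \<in> L" by simp
      have "r = 0"
      proof (rule ccontr)
        assume "r \<noteq> 0"
        then have "r \<in> Q" using r0 \<open>r *\<^sub>R u \<in> L\<close> by (auto simp: Q_def)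
        then show False using t0min r0 by fastforce
      qed
      then have "x = of_int k *\<^sub>R p"
        using \<open>x - of_int k *\<^sub>R p = r *\<^sub>R u\<close> by simp
      then show "x \<in> range (\<lambda>k::int. of_int k *\<^sub>R p)" by blast
    qed
  next
    show "range (\<lambda>k::int. of_int k *\<^sub>R p) \<subseteq> L \<inter> span {u}"
    proof
      fix x assume "x \<in> range (\<lambda>k::int. of_int k *\<^sub>R p)"
      then obtain k :: int where k: "x = of_int k *\<^sub>R p" by blast
      have pL: "p \<in> L" using t0Q by (simp add: p_def Q_def)
      have "x \<in> L" using lat_int[OF pL] k by simp
      moreover have "x \<in> span {u}" unfolding k p_def
        by (intro span_mul span_base) simp
      ultimately show "x \<in> L \<inter> span {u}" by blast
    qed
  qed
  moreover have "p \<in> L" using t0Q by (auto simp: p_def Q_def)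
  moreover have "t0 > 0" using t0Q by (auto simp: Q_def)
  ultimately have "primitive_dir L a b p"
    by (auto simp: primitive_dir_def p_def u_def)
  then show ?thesis by blast
qed

lemma ll_props:
  assumes "lattice_segment L a b"
  defines "p \<equiv> SOME p. primitive_dir L a b p"
  shows "primitive_dir L a b p" "p \<in> L" "p \<noteq> 0" "b - a = lattice_length L a b *\<^sub>R p"
    "lattice_length L a b > 0" "lattice_length L a b = norm (b - a) / norm p"
proof -
  show pd: "primitive_dir L a b p" unfolding p_def by (rule someI_ex[OF prim_exists[OF assms(1)]])
  then obtain c where c: "p \<in> L" "c > 0" "p = c *\<^sub>R (b - a)" by (auto simp: primitive_dir_def)
  have ab: "a \<noteq> b" using assms by (auto simp: lattice_segment_def)
  show "p \<in> L" by fact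
  show "p \<noteq> 0" using c ab by auto
  show ll: "lattice_length L a b = norm (b - a) / norm p"
    by (simp add: lattice_length_def p_def)
  also have "\<dots> = 1 / c"
  proof -
    have "norm p = c * norm (b - a)" using c by simp
    moreover have "norm (b - a) \<noteq> 0" using ab by simp
    ultimately show ?thesis using c by (simp add: divide_simps)
  qed
  finally have "lattice_length L a b = 1 / c" .
  then show "b - a = lattice_length L a b *\<^sub>R p" "lattice_length L a b > 0"
    using c by auto
qed

lemma ll_ge:
  assumes "v \<in> L" "v \<noteq> 0" "t > 0"
  shows "lattice_segment L a (a + t *\<^sub>R v)" "t \<le> lattice_length L a (a + t *\<^sub>R v)"
proof -
  show seg: "lattice_segment L a (a + t *\<^sub>R v)"
    unfolding lattice_segment_def using assms by (intro conjI bexI[of _ v]) auto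
  define p where "p = (SOME p. primitive_dir L a (a + t *\<^sub>R v) p)"
  note P = ll_props[OF seg, folded p_def]
  have "v \<in> L \<inter> span {(a + t *\<^sub>R v) - a}"
    using assms by (auto simp: span_singleton intro!: rev_image_eqI[of "1/t"])
  then obtain k :: int where k: "v = of_int k *\<^sub>R p"
    using P(1) unfolding primitive_dir_def by blast
  define l where "l = lattice_length L a (a + t *\<^sub>R v)"
  have "t *\<^sub>R v = l *\<^sub>R p" using P(4) by (simp add: l_def)
  then have "(t * of_int k) *\<^sub>R p = l *\<^sub>R p" by (simp add: k)
  then have "t * of_int k = l" using P(3) by (metis scaleR_cancel_right)
  moreover have "l > 0" using P(5) by (simp add: l_def)
  ultimately have "k > 0"
  proof -
    have "\<not> k \<le> 0"
    proof
      assume "k \<le> 0"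
      then have "of_int k \<le> (0::real)" by simp
      then have "t * of_int k \<le> 0" using assms(3) by (simp add: mult_nonneg_nonpos)
      then show False using \<open>t * of_int k = l\<close> \<open>l > 0\<close> by simp
    qed
    then show ?thesis by simp
  qed
  then have "t \<le> t * of_int k" using assms by simp
  then show "t \<le> lattice_length L a (a + t *\<^sub>R v)" using \<open>t * of_int k = l\<close> l_def by simp
qed

definition DSet :: "'a set \<Rightarrow> real set" where
  "DSet C = {lattice_length L a b | a b. lattice_segment L a b \<and> closed_segment a b \<subseteq> C}"

lemma diam_DSet: "lattice_diam L C = Sup (DSet C)"
  by (simp add: lattice_diam_def DSet_def)

lemma DSet_bdd:
  assumes "bounded C"
  shows "bdd_above (DSet C)"
proof -
  obtain e where e: "e > 0" "\<And>x. x \<in> L \<Longrightarrow> x \<noteq> 0 \<Longrightarrow> e \<le> norm x" using lat_min by blast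
  have "l \<le> diameter C / e" if "l \<in> DSet C" for l
  proof -
    from that obtain a b where ab: "l = lattice_length L a b" "lattice_segment L a b"
      "closed_segment a b \<subseteq> C" by (auto simp: DSet_def)
    define p where "p = (SOME p. primitive_dir L a b p)"
    note P = ll_props[OF ab(2), folded p_def]
    have "a \<in> C" "b \<in> C" using ab(3) by auto
    then have "norm (b - a) \<le> diameter C"
      using diameter_bounded_bound[OF assms] by (metis dist_norm)
    moreover have "e \<le> norm p" using e(2)[OF P(2) P(3)] .
    ultimately have "norm (b - a) / norm p \<le> diameter C / e"
      using e by (intro frac_le) (auto intro: order_trans[OF norm_ge_zero[of "b - a"]])
    then show ?thesis using P(6) ab(1) by simp
  qed
  then show ?thesis by (auto simp: bdd_above_def)
qed

lemma chord_le_diam: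
  assumes "bounded C" "convex C" "a \<in> C" "a + t *\<^sub>R v \<in> C" "v \<in> L" "v \<noteq> 0" "t > 0"
  shows "t \<le> lattice_diam L C"
proof -
  note G = ll_ge[OF assms(5,6,7), of a]
  have "closed_segment a (a + t *\<^sub>R v) \<subseteq> C"
    using assms by (simp add: closed_segment_subset)
  then have "lattice_length L a (a + t *\<^sub>R v) \<in> DSet C"
    using G by (auto simp: DSet_def)
  then have "lattice_length L a (a + t *\<^sub>R v) \<le> lattice_diam L C"
    unfolding diam_DSet using DSet_bdd[OF assms(1)] by (rule cSup_upper)
  then show ?thesis using G by linarith
qed

end


context
  fixes C :: "'a::euclidean_space set"
  assumes finC: "finite C" and indC: "\<not> affine_dependent C" and fullC: "affine hull C = UNIV"
begin

lemma rep_ex: "\<exists>u. sum u C = 1 \<and> (\<Sum>c\<in>C. u c *\<^sub>R c) = x"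
  using fullC affine_hull_finite[OF finC] by blast

lemma rep_uniq:
  assumes "sum u C = 1" "sum u' C = 1" "(\<Sum>c\<in>C. u c *\<^sub>R c) = (\<Sum>c\<in>C. u' c *\<^sub>R c)" "c \<in> C"
  shows "u c = u' c"
proof (rule ccontr)
  assume ne: "u c \<noteq> u' c"
  have "sum (\<lambda>c. u c - u' c) C = 0" using assms by (simp add: sum_subtractf)
  moreover have "(\<Sum>c\<in>C. (u c - u' c) *\<^sub>R c) = 0"
    using assms by (simp add: scaleR_diff_left sum_subtractf)
  ultimately have "affine_dependent C"
    using ne assms(4) affine_dependent_explicit_finite[OF finC] by fastforce
  with indC show False by simp
qed

lemma dir_ex: "\<exists>d. sum d C = 0 \<and> (\<Sum>c\<in>C. d c *\<^sub>R c) = w"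
proof -
  obtain u where u: "sum u C = 1" "(\<Sum>c\<in>C. u c *\<^sub>R c) = w" using rep_ex by blast
  obtain u' where u': "sum u' C = 1" "(\<Sum>c\<in>C. u' c *\<^sub>R c) = 0" using rep_ex by blast
  show ?thesis
    by (rule exI[of _ "\<lambda>c. u c - u' c"]) (simp add: u u' sum_subtractf scaleR_diff_left)
qed

definition interp :: "('a \<Rightarrow> real) \<Rightarrow> 'a \<Rightarrow> real" where
  "interp g x = (\<Sum>c\<in>C. (SOME u. sum u C = 1 \<and> (\<Sum>c\<in>C. u c *\<^sub>R c) = x) c * g c)"

lemma interp_eq:
  assumes "sum u C = 1"
  shows "interp g (\<Sum>c\<in>C. u c *\<^sub>R c) = (\<Sum>c\<in>C. u c * g c)"
proof -
  define x where "x = (\<Sum>c\<in>C. u c *\<^sub>R c)"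
  define u' where "u' = (SOME u. sum u C = 1 \<and> (\<Sum>c\<in>C. u c *\<^sub>R c) = x)"
  have ex: "\<exists>u. sum u C = 1 \<and> (\<Sum>c\<in>C. u c *\<^sub>R c) = x" using assms x_def by blast
  have "sum u' C = 1 \<and> (\<Sum>c\<in>C. u' c *\<^sub>R c) = x"
    using someI_ex[OF ex] unfolding u'_def .
  then have "u' c = u c" if "c \<in> C" for c
    using rep_uniq[of u' u c] assms that x_def by auto
  then show ?thesis unfolding x_def[symmetric] interp_def u'_def[symmetric]
    by (intro sum.cong) auto
qed

lemma interp_vertex:
  assumes "c \<in> C"
  shows "interp g c = g c"
proof -
  have "interp g (\<Sum>c'\<in>C. (if c' = c then 1 else 0) *\<^sub>R c') = (\<Sum>c'\<in>C. (if c' = c then 1 else 0) * g c')"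
    by (rule interp_eq) (use assms finC in simp)
  moreover have "(\<Sum>c'\<in>C. (if c' = c then 1 else 0) *\<^sub>R c') = (\<Sum>c'\<in>C. if c' = c then c' else 0)"
    by (rule sum.cong) auto
  moreover have "(\<Sum>c'\<in>C. (if c' = c then 1 else 0) * g c') = (\<Sum>c'\<in>C. if c' = c then g c' else 0)"
    by (rule sum.cong) auto
  ultimately show ?thesis using assms finC by simp
qed

lemma interp_comb: "interp g ((1 - t) *\<^sub>R x + t *\<^sub>R z) = (1 - t) * interp g x + t * interp g z"
proof -
  obtain u where u: "sum u C = 1" "(\<Sum>c\<in>C. u c *\<^sub>R c) = x" using rep_ex by blast
  obtain u' where u': "sum u' C = 1" "(\<Sum>c\<in>C. u' c *\<^sub>R c) = z" using rep_ex by blast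
  define w where "w = (\<lambda>c. (1 - t) * u c + t * u' c)"
  have sw: "sum w C = 1" using u u' by (simp add: w_def sum.distrib sum_distrib_left[symmetric])
  have "(\<Sum>c\<in>C. w c *\<^sub>R c) = (1 - t) *\<^sub>R x + t *\<^sub>R z"
    by (simp add: w_def scaleR_add_left sum.distrib scaleR_sum_right flip: u(2) u'(2))
  then have "interp g ((1 - t) *\<^sub>R x + t *\<^sub>R z) = (\<Sum>c\<in>C. w c * g c)"
    using interp_eq[OF sw, of g] by simp
  also have "\<dots> = (1 - t) * (\<Sum>c\<in>C. u c * g c) + t * (\<Sum>c\<in>C. u' c * g c)"
    by (simp add: w_def distrib_right sum.distrib sum_distrib_left mult.assoc)
  also have "\<dots> = (1 - t) * interp g x + t * interp g z"
    using interp_eq[OF u(1), of g] interp_eq[OF u'(1), of g] u u' by simp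
  finally show ?thesis .
qed

lemma interp_dir:
  assumes "sum d C = 0" "(\<Sum>c\<in>C. d c *\<^sub>R c) = w"
  shows "interp g (x + t *\<^sub>R w) = interp g x + t * (\<Sum>c\<in>C. d c * g c)"
proof -
  obtain u where u: "sum u C = 1" "(\<Sum>c\<in>C. u c *\<^sub>R c) = x" using rep_ex by blast
  define v where "v = (\<lambda>c. u c + t * d c)"
  have sv: "sum v C = 1" using u assms by (simp add: v_def sum.distrib sum_distrib_left[symmetric])
  have "(\<Sum>c\<in>C. v c *\<^sub>R c) = x + t *\<^sub>R w"
    by (simp add: v_def scaleR_add_left sum.distrib scaleR_sum_right flip: u(2) assms(2))
  then have "interp g (x + t *\<^sub>R w) = (\<Sum>c\<in>C. v c * g c)"
    using interp_eq[OF sv, of g] by simp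
  also have "\<dots> = (\<Sum>c\<in>C. u c * g c) + t * (\<Sum>c\<in>C. d c * g c)"
    by (simp add: v_def algebra_simps sum.distrib sum_distrib_left)
  finally show ?thesis using interp_eq[OF u(1), of g] u by simp
qed

lemma interp_hull:
  assumes "\<And>p. p \<in> P \<Longrightarrow> lo \<le> interp g p \<and> interp g p \<le> hi" "x \<in> convex hull P"
  shows "lo \<le> interp g x \<and> interp g x \<le> hi"
proof -
  have "convex {x. lo \<le> interp g x \<and> interp g x \<le> hi}"
    unfolding convex_alt
  proof (intro ballI allI impI, goal_cases)
    case (1 x z u)
    have a: "lo \<le> interp g x" "interp g x \<le> hi" "lo \<le> interp g z" "interp g z \<le> hi"
      using 1 by auto
    have u: "0 \<le> u" "0 \<le> 1 - u" using 1 by auto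
    have "(1 - u) * lo \<le> (1 - u) * interp g x" "u * lo \<le> u * interp g z"
      "(1 - u) * interp g x \<le> (1 - u) * hi" "u * interp g z \<le> u * hi"
      using a u by (auto intro: mult_left_mono)
    then have "lo \<le> (1 - u) * interp g x + u * interp g z \<and> (1 - u) * interp g x + u * interp g z \<le> hi"
      by (auto simp: algebra_simps)
    then show ?case using interp_comb[of g u x z] by simp
  qed
  then have "convex hull P \<subseteq> {x. lo \<le> interp g x \<and> interp g x \<le> hi}"
    using assms(1) by (intro hull_minimal) auto
  then show ?thesis using assms(2) by auto
qed

end


lemma facet_excl:
  fixes n :: "'a::euclidean_space"
  assumes finC: "finite C" and indC: "\<not> affine_dependent C" and fullC: "affine hull C = UNIV"
    and n: "n \<noteq> 0" and k: "k \<in> C" "\<And>j. j \<in> C \<Longrightarrow> n \<bullet> j \<le> n \<bullet> k"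
    and d: "sum d C = 0" "(\<Sum>c\<in>C. d c *\<^sub>R c) = w" and nw: "n \<bullet> w = 0"
  shows "\<not> (\<forall>j\<in>C - {k}. d j > 0)" "\<not> (\<forall>j\<in>C - {k}. d j < 0)"
proof -
  define f where "f j = d j * (n \<bullet> j - n \<bullet> k)" for j
  have sf: "sum f C = 0"
  proof -
    have "sum f C = (\<Sum>j\<in>C. d j * (n \<bullet> j)) - (n \<bullet> k) * sum d C"
      by (simp add: f_def algebra_simps sum_subtractf sum_distrib_left sum_distrib_right)
    also have "(\<Sum>j\<in>C. d j * (n \<bullet> j)) = n \<bullet> w"
      by (simp add: d(2)[symmetric] inner_sum_right)
    finally show ?thesis using nw d(1) by simp
  qed
  have const_false: False if "\<And>j. j \<in> C \<Longrightarrow> n \<bullet> j = n \<bullet> k"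
  proof -
    obtain d' where d': "sum d' C = 0" "(\<Sum>c\<in>C. d' c *\<^sub>R c) = n"
      using dir_ex[OF finC indC fullC] by blast
    have "n \<bullet> n = n \<bullet> (\<Sum>c\<in>C. d' c *\<^sub>R c)" using d'(2) by simp
    also have "\<dots> = (\<Sum>j\<in>C. d' j * (n \<bullet> j))"
      by (simp add: inner_sum_right)
    also have "\<dots> = (\<Sum>j\<in>C. d' j * (n \<bullet> k))"
      using that by (intro sum.cong) auto
    also have "\<dots> = 0" using d'(1) by (simp add: sum_distrib_right[symmetric])
    finally show False using n by simp
  qed
  show "\<not> (\<forall>j\<in>C - {k}. d j > 0)"
  proof
    assume pos: "\<forall>j\<in>C - {k}. d j > 0"
    have fle: "\<forall>j\<in>C. f j \<le> 0"
    proof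
      fix j assume j: "j \<in> C"
      show "f j \<le> 0"
      proof (cases "j = k")
        case False
        then have "d j > 0" using pos j by auto
        then show ?thesis using k(2)[OF j] by (simp add: f_def mult_nonneg_nonpos)
      next
        case True
        then show ?thesis by (simp add: f_def)
      qed
    qed
    then have "\<forall>j\<in>C. 0 \<le> - f j" by auto
    moreover have "sum (\<lambda>j. - f j) C = 0" using sf by (simp add: sum_negf)
    ultimately have "\<forall>j\<in>C. - f j = 0" using sum_nonneg_eq_0_iff[OF finC, of "\<lambda>j. - f j"] by simp
    then have "\<forall>j\<in>C. f j = 0" by simp
    then have "n \<bullet> j = n \<bullet> k" if "j \<in> C" for j
    proof (cases "j = k")
      case False
      then have "d j \<noteq> 0" using pos that by force
      moreover have "f j = 0" using \<open>\<forall>j\<in>C. f j = 0\<close> that by blast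
      ultimately show ?thesis by (simp add: f_def)
    next
      case True
      then show ?thesis by simp
    qed
    then show False using const_false by blast
  qed
  show "\<not> (\<forall>j\<in>C - {k}. d j < 0)"
  proof
    assume neg: "\<forall>j\<in>C - {k}. d j < 0"
    have fge: "\<forall>j\<in>C. 0 \<le> f j"
    proof
      fix j assume j: "j \<in> C"
      show "0 \<le> f j"
      proof (cases "j = k")
        case False
        then have "d j < 0" using neg j by auto
        then show ?thesis using k(2)[OF j] by (simp add: f_def mult_nonpos_nonpos)
      next
        case True
        then show ?thesis by (simp add: f_def)
      qed
    qed
    then have "\<forall>j\<in>C. f j = 0" using sum_nonneg_eq_0_iff[OF finC, of f] sf by simp
    then have "n \<bullet> j = n \<bullet> k" if "j \<in> C" for j
    proof (cases "j = k")
      case False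
      then have "d j \<noteq> 0" using neg that by force
      moreover have "f j = 0" using \<open>\<forall>j\<in>C. f j = 0\<close> that by blast
      ultimately show ?thesis by (simp add: f_def)
    next
      case True
      then show ?thesis by simp
    qed
    then show False using const_false by blast
  qed

qed


lemma chord_max:
  fixes S :: "'a::euclidean_space set"
  assumes S: "compact S" "S \<noteq> {}" and w: "w \<noteq> 0"
  defines "K \<equiv> {t. \<exists>a\<in>S. a + t *\<^sub>R w \<in> S}"
  shows "Sup K \<in> K" "\<And>t. t \<in> K \<Longrightarrow> t \<le> Sup K"
proof -
  define Dif where "Dif = {x - y | x y. x \<in> S \<and> y \<in> S}"
  have cD: "compact Dif" unfolding Dif_def by (rule compact_differences[OF S(1) S(1)])
  have KD: "K = (\<lambda>t. t *\<^sub>R w) -` Dif"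
  proof (intro set_eqI iffI)
    fix t assume "t \<in> K"
    then obtain a where "a \<in> S" "a + t *\<^sub>R w \<in> S" by (auto simp: K_def)
    then have "t *\<^sub>R w = (a + t *\<^sub>R w) - a" "a + t *\<^sub>R w \<in> S" "a \<in> S" by auto
    then show "t \<in> (\<lambda>t. t *\<^sub>R w) -` Dif" unfolding Dif_def by blast
  next
    fix t assume "t \<in> (\<lambda>t. t *\<^sub>R w) -` Dif"
    then obtain x y where "x \<in> S" "y \<in> S" "t *\<^sub>R w = x - y" by (auto simp: Dif_def)
    then have "y + t *\<^sub>R w = x" by (simp add: algebra_simps)
    then show "t \<in> K" using \<open>x \<in> S\<close> \<open>y \<in> S\<close> by (auto simp: K_def)
  qed
  have cK: "closed K" unfolding KD
    by (rule continuous_closed_vimage[OF compact_imp_closed[OF cD]]) (intro continuous_intros)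
  have bK: "bdd_above K"
  proof -
    have "t \<le> diameter S / norm w" if "t \<in> K" for t
    proof -
      from that obtain a where a: "a \<in> S" "a + t *\<^sub>R w \<in> S" by (auto simp: K_def)
      have "norm ((a + t *\<^sub>R w) - a) \<le> diameter S"
        using diameter_bounded_bound[OF compact_imp_bounded[OF S(1)] a(2) a(1)] by (simp add: dist_norm)
      then have "\<bar>t\<bar> * norm w \<le> diameter S" by simp
      then have "t * norm w \<le> diameter S" by (smt (verit) mult_right_mono norm_ge_zero)
      then show ?thesis using w by (simp add: field_simps)
    qed
    then show ?thesis by (auto simp: bdd_above_def)
  qed
  have "0 \<in> K" using S(2) by (auto simp: K_def)
  then have ne: "K \<noteq> {}" by auto
  show "Sup K \<in> K" by (rule closed_contains_Sup[OF ne bK cK])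
  show "\<And>t. t \<in> K \<Longrightarrow> t \<le> Sup K" using bK by (simp add: cSup_upper)
qed

theorem proposition4p3:
  fixes L :: "'a::euclidean_space set" and S :: "'a set"
  assumes "is_lattice L"
    and "int DIM('a) simplex S"
    and "lattice_complete L S"
  shows "span {v. diameter_direction L S v} = UNIV"
proof (rule ccontr)
  note lat = assms(1)
  define V where "V = {v. diameter_direction L S v}"
  assume "span {v. diameter_direction L S v} \<noteq> UNIV"
  then have spV: "span V \<noteq> UNIV" by (simp add: V_def)
  have cbS: "convex_body S" using assms(3) by (simp add: lattice_complete_def)
  then have cS: "compact S" "convex S" "interior S \<noteq> {}" by (auto simp: convex_body_def)
  have bS: "bounded S" using cS compact_imp_bounded by blast
  obtain C where finC: "finite C" and indC: "\<not> affine_dependent C"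
    and cardC: "int (card C) = int DIM('a) + 1" and SC: "S = convex hull C"
    using assms(2) by (auto simp: simplex)
  define m where "m = DIM('a)"
  have cardC': "card C = m + 1" using cardC by (simp add: m_def)
  have m1: "m \<ge> 1" by (simp add: m_def DIM_positive Suc_leI)
  have fullC: "affine hull C = UNIV"
  proof -
    have "aff_dim C = int DIM('a)" using aff_dim_affine_independent[OF indC] cardC by linarith
    then show ?thesis using aff_dim_eq_full by blast
  qed
  note B = finC indC fullC
  have "dim V < DIM('a)"
  proof -
    have "dim V \<le> DIM('a)" by (rule dim_subset_UNIV)
    moreover have "dim V \<noteq> DIM('a)" using spV dim_eq_full by blast
    ultimately show ?thesis by simp
  qed
  then obtain n where n: "n \<noteq> 0" "\<And>y. y \<in> span V \<Longrightarrow> orthogonal n y"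
    using orthogonal_to_subspace_exists by blast
  have nV: "n \<bullet> v = 0" if "diameter_direction L S v" for v
    using n(2)[of v] that by (auto simp: V_def orthogonal_def intro: span_base)
  have Cne: "C \<noteq> {}" using cardC' by auto
  obtain k where k: "k \<in> C" "\<And>j. j \<in> C \<Longrightarrow> n \<bullet> j \<le> n \<bullet> k"
  proof -
    define M where "M = Max ((\<lambda>c. n \<bullet> c) ` C)"
    have "M \<in> (\<lambda>c. n \<bullet> c) ` C" unfolding M_def using finC Cne by (intro Max_in) auto
    then obtain k where "k \<in> C" "n \<bullet> k = M" by blast
    moreover have "n \<bullet> j \<le> M" if "j \<in> C" for j unfolding M_def using finC that by (intro Max_ge) auto
    ultimately show ?thesis using that by auto
  qed
  have cardCk: "card (C - {k}) = m" using cardC' k(1) finC by simp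
  define D where "D = lattice_diam L S"
  obtain a0 r where a0: "r > 0" "ball a0 r \<subseteq> S"
    using cS(3) by (auto simp: mem_interior)
  have a0S: "a0 \<in> S" using a0 by auto
  have "\<exists>v\<in>L. v \<noteq> 0"
  proof (rule ccontr)
    assume "\<not> (\<exists>v\<in>L. v \<noteq> 0)"
    then have "L \<subseteq> {0}" by auto
    then have "span L \<subseteq> {0}" using span_mono[of L "{0}"] by simp
    moreover have "span L = UNIV" using lat by (simp add: is_lattice_def)
    ultimately have "(SOME b. b \<in> (Basis::'a set)) = 0" by auto
    moreover have "(SOME b. b \<in> (Basis::'a set)) \<in> Basis"
      by (rule someI_ex) (use nonempty_Basis in blast)
    ultimately show False by (metis nonzero_Basis)
  qed
  then obtain v0 where v0: "v0 \<in> L" "v0 \<noteq> 0" by blast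
  define t0 where "t0 = r / (2 * norm v0)"
  have t0: "t0 > 0" using a0 v0 by (simp add: t0_def)
  have "dist a0 (a0 + t0 *\<^sub>R v0) < r"
    using a0 v0 by (simp add: t0_def dist_norm)
  then have a0t: "a0 + t0 *\<^sub>R v0 \<in> S" using a0 by auto
  have Dpos: "D > 0"
    using chord_le_diam[OF lat bS cS(2) a0S a0t v0 t0] t0 by (simp add: D_def)
  have DSne: "DSet L S \<noteq> {}"
  proof -
    have "closed_segment a0 (a0 + t0 *\<^sub>R v0) \<subseteq> S"
      using cS(2) a0S a0t by (simp add: closed_segment_subset)
    then have "lattice_length L a0 (a0 + t0 *\<^sub>R v0) \<in> DSet L S"
      using ll_ge[OF lat v0 t0, of a0] by (auto simp: DSet_def[OF lat])
    then show ?thesis by blast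
  qed
  have Sne: "S \<noteq> {}" using a0S by blast
  define R where "R = 2 * diameter S / D"
  define W where "W = {w \<in> L. w \<noteq> 0 \<and> n \<bullet> w \<noteq> 0 \<and> norm w \<le> R}"
  have finW: "finite W"
  proof -
    have "W \<subseteq> L \<inter> cball 0 R" by (auto simp: W_def)
    moreover have "finite (L \<inter> cball 0 R)" by (rule lat_finite[OF lat]) simp
    ultimately show ?thesis by (rule finite_subset)
  qed
  define \<tau> where "\<tau> w = Sup {t. \<exists>a\<in>S. a + t *\<^sub>R w \<in> S}" for w
  have \<tau>up: "t \<le> \<tau> w" if "a \<in> S" "a + t *\<^sub>R w \<in> S" "w \<noteq> 0" for w t a
    using chord_max(2)[OF cS(1) Sne that(3)] that by (auto simp: \<tau>_def)
  have \<tau>lt: "\<tau> w < D" if "w \<in> W" for w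
  proof -
    have w: "w \<noteq> 0" "n \<bullet> w \<noteq> 0" "w \<in> L" using that by (auto simp: W_def)
    from chord_max(1)[OF cS(1) Sne w(1)] obtain a where a: "a \<in> S" "a + \<tau> w *\<^sub>R w \<in> S"
      by (auto simp: \<tau>_def)
    show ?thesis
    proof (rule ccontr)
      assume "\<not> \<tau> w < D"
      then have Dt: "D \<le> \<tau> w" by simp
      define u where "u = D / \<tau> w"
      have u: "0 \<le> u" "u \<le> 1" using Dt Dpos by (auto simp: u_def)
      have "(1 - u) *\<^sub>R a + u *\<^sub>R (a + \<tau> w *\<^sub>R w) \<in> S"
        using cS(2) a u by (simp add: convex_alt)
      moreover have "(1 - u) *\<^sub>R a + u *\<^sub>R (a + \<tau> w *\<^sub>R w) = a + D *\<^sub>R w"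
        using Dt Dpos by (simp add: u_def algebra_simps)
      ultimately have "a + D *\<^sub>R w \<in> S" by simp
      then have "closed_segment a (a + D *\<^sub>R w) \<subseteq> S"
        using cS(2) a(1) by (simp add: closed_segment_subset)
      then have "diameter_direction L S w"
        using w by (auto simp: diameter_direction_def D_def)
      then show False using nV w by blast
    qed
  qed
  define \<tau>s where "\<tau>s = Max (insert 0 (\<tau> ` W))"
  have \<tau>s: "\<tau>s < D" "0 \<le> \<tau>s" "\<And>w. w \<in> W \<Longrightarrow> \<tau> w \<le> \<tau>s"
  proof -
    have fin: "finite (insert 0 (\<tau> ` W))" using finW by simp
    have "\<forall>x\<in>insert 0 (\<tau> ` W). x < D" using \<tau>lt Dpos by auto
    then show "\<tau>s < D" unfolding \<tau>s_def using fin by (subst Max_less_iff) auto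
    show "0 \<le> \<tau>s" unfolding \<tau>s_def using fin by (intro Max_ge) auto
    show "\<And>w. w \<in> W \<Longrightarrow> \<tau> w \<le> \<tau>s" unfolding \<tau>s_def using fin by (intro Max_ge) auto
  qed
  define \<epsilon> where "\<epsilon> = min (1 / (2 * real m)) ((D - \<tau>s) / (2 * D))"
  have \<epsilon>: "\<epsilon> > 0" "\<epsilon> \<le> 1 / (2 * real m)" "(1 + \<epsilon>) * \<tau>s < D" "\<epsilon> \<le> 1"
  proof -
    show "\<epsilon> > 0" using m1 \<tau>s Dpos by (simp add: \<epsilon>_def)
    show "\<epsilon> \<le> 1 / (2 * real m)" by (simp add: \<epsilon>_def)
    have "\<epsilon> \<le> (D - \<tau>s) / (2 * D)" by (simp add: \<epsilon>_def)
    then have "\<epsilon> * D \<le> (D - \<tau>s) / 2" using Dpos by (simp add: field_simps)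
    moreover have "\<epsilon> * \<tau>s \<le> \<epsilon> * D" using \<tau>s \<open>\<epsilon> > 0\<close> by (intro mult_left_mono) auto
    ultimately show "(1 + \<epsilon>) * \<tau>s < D" using \<tau>s by (simp add: algebra_simps)
    have "1 / (2 * real m) \<le> 1" using m1 by simp
    then show "\<epsilon> \<le> 1" using \<open>\<epsilon> \<le> 1 / (2 * real m)\<close> by linarith
  qed
  have ekk: "(\<Sum>j\<in>C. (if j = k then 1 else 0) *\<^sub>R j) = k"
  proof -
    have "(\<Sum>j\<in>C. (if j = k then 1 else 0) *\<^sub>R j) = (\<Sum>j\<in>C. if j = k then j else 0)"
      by (rule sum.cong) auto
    then show ?thesis using finC k(1) by simp
  qed
  define uy where "uy j = (if j = k then - \<epsilon> else (1 + \<epsilon>) / real m)" for j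
  define wv where "wv j = (if j = k then 0 else 1 / real m)" for j
  define y where "y = (\<Sum>j\<in>C. uy j *\<^sub>R j)"
  have sumCk: "sum f C = f k + sum f (C - {k})" for f :: "'a \<Rightarrow> real"
    using finC k(1) by (simp add: sum.remove)
  have suy: "sum uy C = 1"
  proof -
    have "sum uy (C - {k}) = (\<Sum>j\<in>C - {k}. (1 + \<epsilon>) / real m)"
      by (rule sum.cong) (auto simp: uy_def)
    also have "\<dots> = 1 + \<epsilon>" using cardCk m1 by simp
    finally show ?thesis using sumCk[of uy] by (simp add: uy_def)
  qed
  have swv: "sum wv C = 1"
  proof -
    have "sum wv (C - {k}) = (\<Sum>j\<in>C - {k}. 1 / real m)"
      by (rule sum.cong) (auto simp: wv_def)
    also have "\<dots> = 1" using cardCk m1 by simp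
    finally show ?thesis using sumCk[of wv] by (simp add: wv_def)
  qed
  define mc where "mc = (\<Sum>j\<in>C. wv j *\<^sub>R j)"
  have mcS: "mc \<in> S"
    unfolding SC convex_hull_finite[OF finC] mc_def using swv
    by (auto simp: wv_def intro!: exI[of _ wv])
  have y_eq: "y = (1 + \<epsilon>) *\<^sub>R mc - \<epsilon> *\<^sub>R k"
  proof -
    have "uy j = (1 + \<epsilon>) * wv j - \<epsilon> * (if j = k then 1 else 0)" for j
      by (simp add: uy_def wv_def)
    then have "y = (\<Sum>j\<in>C. ((1 + \<epsilon>) * wv j - \<epsilon> * (if j = k then 1 else 0)) *\<^sub>R j)"
      by (simp add: y_def)
    also have "\<dots> = (1 + \<epsilon>) *\<^sub>R mc - \<epsilon> *\<^sub>R (\<Sum>j\<in>C. (if j = k then 1 else 0) *\<^sub>R j)"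
      by (simp add: mc_def scaleR_diff_left sum_subtractf scaleR_sum_right)
    finally show ?thesis using ekk by simp
  qed
  define S' where "S' = convex hull (insert y C)"
  have SS': "S \<subseteq> S'" by (simp add: SC S'_def hull_mono subset_insertI)
  have yS': "y \<in> S'" by (simp add: S'_def hull_inc)
  have ynS: "y \<notin> S"
  proof
    assume yS: "y \<in> S"
    define gk where "gk j = (if j = k then 1 else 0 :: real)" for j
    have "interp C gk y = (\<Sum>j\<in>C. uy j * gk j)"
      unfolding y_def by (rule interp_eq[OF B suy])
    also have "\<dots> = (\<Sum>j\<in>C. if j = k then uy j else 0)"
      by (rule sum.cong) (auto simp: gk_def)
    also have "\<dots> = - \<epsilon>" using finC k(1) by (simp add: uy_def)
    finally have "interp C gk y = - \<epsilon>" .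
    moreover have "0 \<le> interp C gk y \<and> interp C gk y \<le> 1"
      by (rule interp_hull[OF B _ yS[unfolded SC]]) (auto simp: interp_vertex[OF B] gk_def)
    ultimately show False using \<epsilon> by simp
  qed
  have cb': "convex_body S'"
  proof -
    have "compact S'" unfolding S'_def using finC by (simp add: compact_convex_hull finite_imp_compact)
    moreover have "convex S'" by (simp add: S'_def convex_convex_hull)
    moreover have "interior S \<subseteq> interior S'" using SS' by (rule interior_mono)
    ultimately show ?thesis using cS by (auto simp: convex_body_def)
  qed
  have bS': "bounded S'" using cb' by (simp add: convex_body_def compact_imp_bounded)
  define h where "h x = k + (1 / (1 + \<epsilon>)) *\<^sub>R (x - k)" for x
  have kS: "k \<in> S" using k(1) SC by (simp add: hull_inc)
  have hS: "h x \<in> S" if "x \<in> S'" for x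
  proof -
    define Z where "Z = {x. h x \<in> S}"
    define c where "c = 1 / (1 + \<epsilon>)"
    have c: "0 \<le> c" "c \<le> 1" using \<epsilon> by (auto simp: c_def)
    have hc: "h x = (1 - c) *\<^sub>R k + c *\<^sub>R x" for x by (simp add: h_def c_def algebra_simps)
    have "convex Z" unfolding convex_alt
    proof (intro ballI allI impI)
      fix x z and u :: real assume xz: "x \<in> Z" "z \<in> Z" "0 \<le> u \<and> u \<le> 1"
      have "h ((1 - u) *\<^sub>R x + u *\<^sub>R z) = (1 - u) *\<^sub>R h x + u *\<^sub>R h z"
        by (simp add: hc algebra_simps)
      moreover have "(1 - u) *\<^sub>R h x + u *\<^sub>R h z \<in> S"
        using cS(2) xz by (simp add: Z_def convex_alt)
      ultimately show "(1 - u) *\<^sub>R x + u *\<^sub>R z \<in> Z" by (simp add: Z_def)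
    qed
    moreover have "insert y C \<subseteq> Z"
    proof
      fix x assume "x \<in> insert y C"
      then show "x \<in> Z"
      proof
        assume "x = y"
        have e1: "(1 + \<epsilon>) *\<^sub>R mc - \<epsilon> *\<^sub>R k - k = (1 + \<epsilon>) *\<^sub>R (mc - k)"
          by (simp add: algebra_simps)
        have "h y = k + (1 / (1 + \<epsilon>)) *\<^sub>R ((1 + \<epsilon>) *\<^sub>R (mc - k))"
          by (simp add: h_def y_eq e1)
        also have "\<dots> = mc" using \<epsilon> by simp
        finally have "h y = mc" .
        then show ?thesis using \<open>x = y\<close> mcS by (simp add: Z_def)
      next
        assume "x \<in> C"
        then have "x \<in> S" using SC by (simp add: hull_inc)
        then have "(1 - c) *\<^sub>R k + c *\<^sub>R x \<in> S" using cS(2) kS c by (simp add: convex_alt)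
        then show ?thesis by (simp add: Z_def hc)
      qed
    qed
    ultimately have "S' \<subseteq> Z" unfolding S'_def by (rule hull_minimal[rotated])
    then show ?thesis using that by (auto simp: Z_def)
  qed
  have CH: "l \<le> D" if w: "w \<in> L" "w \<noteq> 0" and l: "l > 0" and a: "a \<in> S'" "a + l *\<^sub>R w \<in> S'"
    for w l a
  proof (cases "n \<bullet> w = 0")
    case False
    show ?thesis
    proof (rule ccontr)
      assume "\<not> l \<le> D"
      then have lD: "D < l" by simp
      have ha: "h a \<in> S" "h (a + l *\<^sub>R w) \<in> S" using hS a by auto
      have eq: "h (a + l *\<^sub>R w) = h a + (l / (1 + \<epsilon>)) *\<^sub>R w" by (simp add: h_def algebra_simps)
      have "dist (h a) (h (a + l *\<^sub>R w)) \<le> diameter S"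
        by (rule diameter_bounded_bound[OF bS ha])
      then have "norm ((l / (1 + \<epsilon>)) *\<^sub>R w) \<le> diameter S" by (simp add: eq dist_norm)
      then have n1: "l / (1 + \<epsilon>) * norm w \<le> diameter S" using l \<epsilon> by simp
      have "l * norm w \<le> (1 + \<epsilon>) * diameter S"
        using n1 \<epsilon> by (simp add: field_simps)
      also have "\<dots> \<le> 2 * diameter S"
        using \<epsilon> diameter_bounded_bound[OF bS a0S a0S] by (intro mult_right_mono) auto
      finally have "l * norm w \<le> 2 * diameter S" .
      moreover have "D * norm w \<le> l * norm w" using lD by (intro mult_right_mono) auto
      ultimately have "D * norm w \<le> 2 * diameter S" by linarith
      then have "norm w \<le> R" using Dpos by (simp add: R_def field_simps)
      then have wW: "w \<in> W" using w False by (simp add: W_def)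
      have "l / (1 + \<epsilon>) \<le> \<tau> w" using \<tau>up[OF ha(1) _ w(2)] ha(2) eq by simp
      also have "\<dots> \<le> \<tau>s" using \<tau>s(3)[OF wW] .
      finally have "l \<le> (1 + \<epsilon>) * \<tau>s" using \<epsilon> by (simp add: field_simps)
      then show False using \<epsilon>(3) lD by linarith
    qed
  next
    case True
    obtain dl where dl: "sum dl C = 0" "(\<Sum>c\<in>C. dl c *\<^sub>R c) = w" using dir_ex[OF B] by blast
    define g where "g j = (if dl j > 0 then 1 else if dl j < 0 then 0 else 1 / 2 :: real)" for j
    define P where "P = (\<Sum>j\<in>C. dl j * g j)"
    note fe = facet_excl[OF B n(1) k dl True]
    have g01: "0 \<le> g j" "g j \<le> 1" for j by (auto simp: g_def)
    have Pmax: "dl j * g j = max (dl j) 0" for j by (auto simp: g_def)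
    define A where "A = sum g (C - {k})"
    have A1: "1 / 2 \<le> A"
    proof -
      obtain j2 where j2: "j2 \<in> C - {k}" "\<not> dl j2 < 0" using fe(2) by blast
      then have "1 / 2 \<le> g j2" by (auto simp: g_def)
      also have "g j2 \<le> A" unfolding A_def using finC j2(1) g01
        by (intro member_le_sum) auto
      finally show ?thesis .
    qed
    have A2: "A \<le> real m - 1 / 2"
    proof -
      obtain j1 where j1: "j1 \<in> C - {k}" "\<not> dl j1 > 0" using fe(1) by blast
      then have "g j1 \<le> 1 / 2" by (auto simp: g_def)
      have "A = g j1 + sum g (C - {k} - {j1})"
        unfolding A_def using finC j1(1) by (simp add: sum.remove)
      moreover have "sum g (C - {k} - {j1}) \<le> of_nat (card (C - {k} - {j1})) * 1"
        by (rule sum_bounded_above) (simp add: g01)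
      moreover have "card (C - {k} - {j1}) = m - 1" using cardCk j1(1) finC by simp
      ultimately show ?thesis using \<open>g j1 \<le> 1 / 2\<close> m1 by (simp add: of_nat_diff)
    qed
    have Fy: "0 \<le> interp C g y \<and> interp C g y \<le> 1"
    proof -
      have "interp C g y = (\<Sum>j\<in>C. uy j * g j)"
        unfolding y_def by (rule interp_eq[OF B suy])
      also have "\<dots> = uy k * g k + (\<Sum>j\<in>C - {k}. uy j * g j)" by (rule sumCk)
      also have "(\<Sum>j\<in>C - {k}. uy j * g j) = (\<Sum>j\<in>C - {k}. (1 + \<epsilon>) / real m * g j)"
        by (rule sum.cong) (auto simp: uy_def)
      also have "\<dots> = (1 + \<epsilon>) * (A / real m)"
        by (simp add: A_def sum_distrib_left sum_divide_distrib)
      finally have Fe: "interp C g y = - \<epsilon> * g k + (1 + \<epsilon>) * (A / real m)" by (simp add: uy_def)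
      define x where "x = A / real m"
      have mpos: "real m > 0" using m1 by simp
      have x1: "1 / (2 * real m) \<le> x" using A1 mpos by (simp add: x_def field_simps)
      have x2: "x \<le> 1 - 1 / (2 * real m)" using A2 mpos by (simp add: x_def field_simps)
      have eg: "\<epsilon> * g k \<le> \<epsilon>" "0 \<le> \<epsilon> * g k" using \<epsilon> g01[of k] by (auto intro: mult_left_le)
      have i0: "0 \<le> 1 / (2 * real m)" using mpos by simp
      have x01: "0 \<le> x" "x \<le> 1" using x1 x2 i0 by linarith+
      have ex: "\<epsilon> * x \<le> \<epsilon>" "0 \<le> \<epsilon> * x" using \<epsilon> x01
        by (auto intro!: mult_left_le)
      have "interp C g y = x + \<epsilon> * x - \<epsilon> * g k" using Fe by (simp add: x_def algebra_simps add_divide_distrib)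
      then show ?thesis using eg ex x1 x2 \<epsilon>(2) by linarith
    qed
    have F01: "0 \<le> interp C g x \<and> interp C g x \<le> 1" if "x \<in> S'" for x
      by (rule interp_hull[OF B _ that[unfolded S'_def]]) (use Fy g01 interp_vertex[OF B] in auto)
    have Fb: "interp C g (a + l *\<^sub>R w) = interp C g a + l * P"
      unfolding P_def by (rule interp_dir[OF B dl])
    have lP: "l * P \<le> 1" using F01[OF a(1)] F01[OF a(2)] Fb by linarith
    have sP: "(\<Sum>j\<in>C. max (dl j) 0) = P" unfolding P_def by (rule sum.cong) (auto simp: Pmax)
    have sN: "(\<Sum>j\<in>C. max (- dl j) 0) = P"
    proof -
      have "(\<Sum>j\<in>C. max (dl j) 0) - (\<Sum>j\<in>C. max (- dl j) 0) = (\<Sum>j\<in>C. dl j)"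
        by (simp add: sum_subtractf[symmetric]) (rule sum.cong, auto)
      then show ?thesis using sP dl(1) by simp
    qed
    have Ppos: "P > 0"
    proof -
      have "\<exists>j\<in>C. dl j \<noteq> 0"
      proof (rule ccontr)
        assume "\<not> (\<exists>j\<in>C. dl j \<noteq> 0)"
        then have "(\<Sum>c\<in>C. dl c *\<^sub>R c) = 0" by simp
        then show False using dl w by simp
      qed
      then obtain j where j: "j \<in> C" "dl j \<noteq> 0" by blast
      have "0 < max (dl j) 0 + max (- dl j) 0" using j by auto
      also have "\<dots> \<le> P + P" using sP sN finC j(1)
        by (metis add_mono member_le_sum max.cobounded2)
      finally show ?thesis by simp
    qed
    define cm where "cm j = max (- dl j) 0 / P" for j
    define cp where "cp j = max (dl j) 0 / P" for j
    define a1 where "a1 = (\<Sum>j\<in>C. cm j *\<^sub>R j)"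
    have a1S: "a1 \<in> S"
    proof -
      have "sum cm C = 1" using sN Ppos by (simp add: cm_def sum_divide_distrib[symmetric])
      moreover have "\<forall>j\<in>C. 0 \<le> cm j" using Ppos by (simp add: cm_def)
      ultimately show ?thesis unfolding SC convex_hull_finite[OF finC] a1_def by blast
    qed
    have a2S: "a1 + (1 / P) *\<^sub>R w \<in> S"
    proof -
      have "a1 + (1 / P) *\<^sub>R w = (\<Sum>j\<in>C. cm j *\<^sub>R j) + (\<Sum>j\<in>C. (dl j / P) *\<^sub>R j)"
        by (simp add: a1_def dl(2)[symmetric] scaleR_sum_right)
      also have "\<dots> = (\<Sum>j\<in>C. cp j *\<^sub>R j)"
        by (simp add: sum.distrib[symmetric] scaleR_add_left[symmetric] cm_def cp_def
            add_divide_distrib[symmetric]) (rule sum.cong, auto)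
      finally have eq: "a1 + (1 / P) *\<^sub>R w = (\<Sum>j\<in>C. cp j *\<^sub>R j)" .
      have "sum cp C = 1" using sP Ppos by (simp add: cp_def sum_divide_distrib[symmetric])
      moreover have "\<forall>j\<in>C. 0 \<le> cp j" using Ppos by (simp add: cp_def)
      ultimately show ?thesis unfolding eq SC convex_hull_finite[OF finC] by blast
    qed
    have "1 / P \<le> D"
      unfolding D_def using Ppos w by (intro chord_le_diam[OF lat bS cS(2) a1S a2S]) auto
    moreover have "l \<le> 1 / P" using lP Ppos by (simp add: field_simps)
    ultimately show ?thesis by linarith
  qed
  have DS_sub: "DSet L S \<subseteq> DSet L S'" using SS' by (auto simp: DSet_def[OF lat])
  have bdd': "bdd_above (DSet L S')" by (rule DSet_bdd[OF lat bS'])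
  have le: "lattice_diam L S' \<le> D"
  proof -
    have "x \<le> D" if "x \<in> DSet L S'" for x
    proof -
      from that obtain a b where ab: "x = lattice_length L a b" "lattice_segment L a b"
        "closed_segment a b \<subseteq> S'"
        by (auto simp: DSet_def[OF lat])
      define p where "p = (SOME p. primitive_dir L a b p)"
      note P = ll_props[OF lat ab(2), folded p_def]
      have abS: "a \<in> S'" "b \<in> S'" using ab(3) by auto
      have "b = a + lattice_length L a b *\<^sub>R p" using P(4) by (simp add: algebra_simps)
      then have "a + lattice_length L a b *\<^sub>R p \<in> S'" using abS by simp
      then show ?thesis using CH[OF P(2) P(3) P(5) abS(1)] ab(1) by simp
    qed
    moreover have "DSet L S' \<noteq> {}" using DSne DS_sub by blast
    ultimately show ?thesis unfolding diam_DSet[OF lat] by (meson cSup_least)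
  qed
  have ge: "D \<le> lattice_diam L S'"
    unfolding D_def diam_DSet[OF lat] by (rule cSup_subset_mono[OF DSne bdd' DS_sub])
  have "S \<subset> S'" using SS' yS' ynS by blast
  moreover have "lattice_diam L S' = lattice_diam L S" using le ge by (simp add: D_def)
  ultimately have "\<exists>C'. convex_body C' \<and> S \<subset> C' \<and> lattice_diam L C' = lattice_diam L S"
    using cb' by blast
  then show False using assms(3) unfolding lattice_complete_def by blast
qed


end
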